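(* For every $\bar\alpha\in V$ and every positive integer $L$, $\bar M(\bar\alpha)\le\bar M(\bar\alpha^L)$.
   Context: For a non-zero algebraic number $\gamma$ with minimal polynomial $A\prod_{n=1}^N(x-\gamma_n)$ over $\mathbb Z$ (primitive, $A>0$), $M(\gamma)=A\prod_{n=1}^N\max\{1,|\gamma_n|\}$. $V=\overline{\mathbb Q}^\times/\mathrm{Tor}(\overline{\mathbb Q}^\times)$ with quotient map $\pi$. $\bar M(\beta)=\inf\{M(\zeta\beta):\zeta\text{ a root of unity}\}$, which is well-defined on $V$; for $\bar\beta\in V$, $\bar M(\bar\beta)=\inf\{M(\beta):\beta\in\pi^{-1}(\bar\beta)\}$. *)

theory Defs
  imports "Berlekamp_Zassenhaus.Mahler_Measure"
begin

definition min_int_poly :: "complex \<Rightarrow> int poly" where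
  "min_int_poly x = (THE p. p \<noteq> 0 \<and> poly (map_poly of_int p) x = 0 \<and> irreducible p
      \<and> content p = 1 \<and> lead_coeff p > 0)"

definition mahler_alg :: "complex \<Rightarrow> real" where
  "mahler_alg x = mahler_measure (min_int_poly x)"

definition root_of_unity :: "complex \<Rightarrow> bool" where
  "root_of_unity z \<longleftrightarrow> (\<exists>n::nat. n > 0 \<and> z ^ n = 1)"

text \<open>Mbar(beta) = inf over roots of unity zeta of M(zeta * beta); this is the
  value of Mbar on the torsion class of beta in V.\<close>
definition mahler_bar :: "complex \<Rightarrow> real" where
  "mahler_bar b = Inf {mahler_alg (z * b) | z. root_of_unity z}"

end

theory Submission
  imports Defs "Jordan_Normal_Form.Char_Poly" "Berlekamp_Zassenhaus.Factor_Bound"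
begin

lemma of_rat_of_int_poly: "map_poly of_rat (of_int_poly p :: rat poly) = (of_int_poly p :: complex poly)"
  by (rule poly_eqI) (simp add: coeff_map_poly)

lemma irreducible_root_dvd:
  fixes p Q :: "int poly" and x :: complex
  assumes irr: "irreducible p" and px: "poly (of_int_poly p) x = 0"
    and Qx: "poly (of_int_poly Q) x = 0"
  shows "p dvd Q"
proof -
  define g where "g = gcd p Q"
  have "g dvd p" unfolding g_def by simp
  then obtain h where ph: "p = g * h" by (auto elim: dvdE)
  from irreducibleD[OF irr ph] have "is_unit g \<or> is_unit h" .
  then show ?thesis
  proof
    assume hu: "is_unit h"
    have "p dvd g" using ph hu by (simp add: dvd_mult_unit_iff)
    then show ?thesis unfolding g_def using dvd_trans gcd_dvd2 by blast
  next
    assume gu: "is_unit g"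
    then obtain c where gc: "g = [:c:]" and cu: "is_unit c" by (auto simp: is_unit_poly_iff)
    from cu have "\<bar>c\<bar> = 1" by (simp add: zdvd1_eq)
    then have c0: "c \<noteq> 0" by auto
    define G where "G = gcd (of_int_poly p :: rat poly) (of_int_poly Q)"
    have G1: "G = 1"
    proof -
      have "G = smult (inverse (rat_of_int (lead_coeff g))) (of_int_poly g)"
        unfolding G_def gcd_rat_to_gcd_int g_def ..
      also have "\<dots> = [:1:]" using c0 gc by simp
      also have "\<dots> = 1" by (simp add: pCons_one)
      finally show ?thesis .
    qed
    obtain a b where ab: "bezout_coefficients (of_int_poly p :: rat poly) (of_int_poly Q) = (a, b)"
      by (cases "bezout_coefficients (of_int_poly p :: rat poly) (of_int_poly Q)") auto
    from bezout_coefficients[OF ab] G1 have 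
      "a * of_int_poly p + b * of_int_poly Q = 1" unfolding G_def by simp
    then have "map_poly (of_rat :: rat \<Rightarrow> complex) (a * of_int_poly p + b * of_int_poly Q) = 1" by simp
    then have "map_poly of_rat a * of_int_poly p + map_poly of_rat b * of_int_poly Q = (1 :: complex poly)"
    proof -
      interpret mh: map_poly_comm_ring_hom "of_rat :: rat \<Rightarrow> complex" ..
      assume "map_poly (of_rat :: rat \<Rightarrow> complex) (a * of_int_poly p + b * of_int_poly Q) = 1"
      then show ?thesis by (simp add: mh.hom_mult mh.hom_add of_rat_of_int_poly)
    qed
    then have "poly (map_poly of_rat a * of_int_poly p + map_poly of_rat b * of_int_poly Q) x = poly (1 :: complex poly) x"
      by simp
    then show ?thesis using px Qx by simp
  qed
qed


definition mpp :: "complex \<Rightarrow> int poly \<Rightarrow> bool" where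
  "mpp x p \<longleftrightarrow> p \<noteq> 0 \<and> poly (map_poly of_int p) x = 0 \<and> irreducible p
      \<and> content p = 1 \<and> lead_coeff p > 0"

lemma normalize_pos_lead: "lead_coeff (p :: int poly) > 0 \<Longrightarrow> normalize p = p"
  by (simp add: normalize_poly_def pCons_one)

lemma mpp_unique: assumes "mpp x p" "mpp x q" shows "p = q"
proof -
  have "p dvd q" using assms irreducible_root_dvd unfolding mpp_def by blast
  moreover have "q dvd p" using assms irreducible_root_dvd unfolding mpp_def by blast
  ultimately have "normalize p = normalize q" by (rule normalization_semidom_class.associatedI)
  then show ?thesis using assms normalize_pos_lead unfolding mpp_def by metis
qed

lemma algebraic_int_poly:
  assumes "algebraic (x::complex)"
  obtains P :: "int poly" where "P \<noteq> 0" "poly (of_int_poly P) x = 0"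
proof -
  from assms obtain p where pZ: "\<And>i. coeff p i \<in> \<int>" and p0: "p \<noteq> 0" and px: "poly p x = 0"
    unfolding algebraic_def by blast
  define P where "P = map_poly (\<lambda>c. \<lfloor>Re c\<rfloor>) p"
  have eq: "of_int_poly P = p"
  proof (rule poly_eqI)
    fix i
    from pZ[of i] obtain k where k: "coeff p i = of_int k" by (auto elim: Ints_cases)
    show "coeff (of_int_poly P) i = coeff p i"
      unfolding P_def by (simp add: coeff_map_poly k)
  qed
  show ?thesis
  proof
    show "P \<noteq> 0" using eq p0 by auto
    show "poly (of_int_poly P) x = 0" using eq px by simp
  qed
qed

lemma mpp_exists:
  assumes "algebraic x"
  shows "\<exists>p. mpp x p"
proof -
  from algebraic_int_poly[OF assms] obtain P :: "int poly" where P0: "P \<noteq> 0"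
    and Px: "poly (of_int_poly P) x = 0" by blast
  have "P dvd prod_mset (prime_factorization P)"
    using prod_mset_prime_factorization_weak[OF P0] by (metis normalization_semidom_class.associatedD2)
  then obtain k where k: "prod_mset (prime_factorization P) = P * k" by (auto elim: dvdE)
  have "poly (of_int_poly (prod_mset (prime_factorization P))) x = 0"
    unfolding k using Px by (simp add: of_int_poly_hom.hom_mult)
  then have "poly (prod_mset (image_mset of_int_poly (prime_factorization P))) x = (0::complex)"
    by (simp only: of_int_poly_hom.hom_prod_mset)
  then have "(\<Prod>q\<in>#prime_factorization P. poly (of_int_poly q) x) = (0::complex)"
    by (simp only: poly_prod_mset)
  then obtain q where qin: "q \<in># prime_factorization P" and qx: "poly (of_int_poly q) x = 0"
    by (auto simp: prod_mset_zero_iff)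
  from in_prime_factors_imp_prime[OF qin] have pq: "prime q" .
  then have irr: "irreducible q" using pq unfolding prime_def by (blast intro: Factorial_Ring.algebraic_semidom_class.prime_elem_imp_irreducible)
  have nq: "normalize q = q" using pq by (simp add: prime_def)
  have q0: "q \<noteq> 0" using pq by auto
  have dq: "degree q \<noteq> 0"
  proof
    assume "degree q = 0"
    then obtain c where "q = [:c:]" by (metis degree_eq_zeroE)
    then show False using q0 qx by auto
  qed
  have cq: "content q = 1" using irreducible_imp_primitive[OF irr dq] by simp
  have lq: "lead_coeff q > 0"
  proof -
    have "unit_factor q * normalize q = q" by (rule unit_factor_mult_normalize)
    then have "unit_factor q * q = 1 * q" using nq by simp
    then have "unit_factor q = 1" using q0 by (metis mult_cancel_right)
    then have "[:sgn (lead_coeff q):] = 1" by (simp add: unit_factor_poly_def)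
    then have "sgn (lead_coeff q) = 1" by (metis pCons_one pCons_eq_iff)
    then show ?thesis by (simp add: sgn_1_pos)
  qed
  show ?thesis using q0 qx irr cq lq unfolding mpp_def by blast
qed

lemma min_int_poly: assumes "algebraic x" shows "mpp x (min_int_poly x)"
proof -
  from mpp_exists[OF assms] obtain p where p: "mpp x p" by blast
  have "min_int_poly x = p" unfolding min_int_poly_def
    unfolding mpp_def[symmetric] by (rule the_equality[where P="mpp x", OF p]) (rule mpp_unique[OF _ p])
  then show ?thesis using p by simp
qed


lemma mm_smult_prod_list:
  "mahler_measure_poly (smult c (\<Prod>a\<leftarrow>as. g a)) = cmod c * (\<Prod>a\<leftarrow>as. mahler_measure_poly (g a))"
proof (induct as)
  case Nil
  have "smult c (\<Prod>a\<leftarrow>[]. g a) = [:c:]" by simp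
  then show ?case by simp
next
  case (Cons b as)
  have eq: "smult c (\<Prod>a\<leftarrow>b # as. g a) = smult c (\<Prod>a\<leftarrow>as. g a) * g b"
    by (simp add: mult.commute)
  show ?case unfolding eq measure_eq_prod Cons by simp
qed

lemma mm_binom:
  assumes L: "L > 0"
  shows "mahler_measure_poly (monom 1 L + [:- a:]) = max 1 (cmod (a::complex))"
proof -
  define h where "h = monom (1::complex) L + [:- a:]"
  have dh: "degree h = L" unfolding h_def using L by (simp add: degree_add_eq_left degree_monom_eq)
  have "coeff [:- a:] L = 0" using L by (cases L) auto
  then have lh: "lead_coeff h = 1" unfolding dh unfolding h_def by (simp add: coeff_monom)
  define rs where "rs = complex_roots_complex h"
  have hrs: "smult 1 (\<Prod>a\<leftarrow>rs. [:- a, 1:]) = h" using complex_roots(1)[of h] lh unfolding rs_def by simp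
  have lrs: "length rs = L" unfolding rs_def using dh by simp
  have rootb: "cmod b = root L (cmod a)" if "b \<in> set rs" for b
  proof -
    have "poly (\<Prod>a\<leftarrow>rs. [:- a, 1:]) b = 0"
      using that by (induct rs) (auto simp: poly_prod_list)
    then have "poly h b = 0" using hrs by simp
    then have "b ^ L = a" unfolding h_def by (simp add: poly_monom)
    then have "cmod b ^ L = cmod a" by (metis norm_power)
    then show ?thesis using L by (intro real_root_pos_unique[symmetric]) auto
  qed
  have "mahler_measure_poly h = (\<Prod>b\<leftarrow>rs. max 1 (cmod b))"
    unfolding mahler_measure_poly_def lh rs_def by simp
  also have "map (\<lambda>b. max 1 (cmod b)) rs = map (\<lambda>b. max 1 (root L (cmod a))) rs"
    using rootb by (intro map_cong) auto
  also have "prod_list \<dots> = (max 1 (root L (cmod a))) ^ L"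
    by (simp add: map_replicate_const lrs)
  also have "\<dots> = max 1 (cmod a)"
  proof (cases "cmod a \<le> 1")
    case True
    then have "root L (cmod a) \<le> 1" using L by simp
    then show ?thesis using True by (simp add: max_def)
  next
    case False
    then have "root L (cmod a) > 1" using L by simp
    then show ?thesis using False L by (simp add: max_def real_root_pow_pos2)
  qed
  finally show ?thesis unfolding h_def .
qed

lemma mm_pcompose_monom:
  fixes f :: "complex poly"
  assumes L: "L > 0"
  shows "mahler_measure_poly (f \<circ>\<^sub>p monom 1 L) = mahler_measure_poly f"
proof -
  define rs where "rs = complex_roots_complex f"
  have f: "f = smult (lead_coeff f) (\<Prod>a\<leftarrow>rs. [:- a, 1:])"
    using complex_roots(1)[of f] unfolding rs_def by simp
  have eq1: "f \<circ>\<^sub>p monom 1 L = smult (lead_coeff f) (\<Prod>a\<leftarrow>rs. [:- a, 1:] \<circ>\<^sub>p monom 1 L)"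
    by (subst f) (simp add: pcompose_smult pcompose_hom.hom_prod_list o_def)
  have eq2: "(\<lambda>a. [:- a, 1:] \<circ>\<^sub>p monom 1 L) = (\<lambda>a::complex. monom 1 L + [:- a:])"
    by (rule ext) (simp add: pcompose_pCons add.commute)
  have eq: "f \<circ>\<^sub>p monom 1 L = smult (lead_coeff f) (\<Prod>a\<leftarrow>rs. monom 1 L + [:- a:])"
    using eq1 eq2 by simp
  have "mahler_measure_poly (f \<circ>\<^sub>p monom 1 L) = cmod (lead_coeff f) * (\<Prod>a\<leftarrow>rs. max 1 (cmod a))"
    unfolding eq mm_smult_prod_list mm_binom[OF L] ..
  also have "\<dots> = mahler_measure_poly f" unfolding mahler_measure_poly_def rs_def ..
  finally show ?thesis .
qed

lemma mahler_measure_pcompose_monom: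
  fixes p :: "int poly"
  assumes L: "L > 0"
  shows "mahler_measure (p \<circ>\<^sub>p monom 1 L) = mahler_measure p"
proof -
  have "of_int_poly (p \<circ>\<^sub>p monom 1 L) = (of_int_poly p :: complex poly) \<circ>\<^sub>p monom 1 L"
    by (simp add: of_int_hom.map_poly_pcompose map_poly_monom)
  then show ?thesis unfolding mahler_measure_def using mm_pcompose_monom[OF L] by simp
qed


lemma algebraic_power:
  assumes "algebraic (x::complex)"
  shows "algebraic (x ^ m)"
proof -
  from algebraic_int_poly[OF assms] obtain P :: "int poly" where P0: "P \<noteq> 0"
    and Px: "poly (of_int_poly P) x = 0" by blast
  define n where "n = degree P"
  have n0: "n > 0"
  proof (rule ccontr)
    assume "\<not> n > 0"
    then have "degree P = 0" unfolding n_def by simp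
    then obtain d where "P = [:d:]" by (metis degree_eq_zeroE)
    then show False using P0 Px by auto
  qed
  define lc where "lc = lead_coeff P"
  have lc0: "lc \<noteq> 0" unfolding lc_def using P0 by simp
  define c where "c j = rat_of_int (coeff P j) / rat_of_int lc" for j
  define C0 :: "rat mat" where
    "C0 = mat n n (\<lambda>(i,j). if Suc i < n then (if j = Suc i then 1 else 0) else - c j)"
  define C :: "complex mat" where "C = map_mat of_rat C0"
  define v :: "complex vec" where "v = vec n (\<lambda>j. x ^ j)"
  have C0c: "C0 \<in> carrier_mat n n" unfolding C0_def by simp
  have Cc: "C \<in> carrier_mat n n" unfolding C_def using C0c by simp
  have "poly (of_int_poly P) x = (\<Sum>j\<le>n. of_int (coeff P j) * x ^ j)"
    unfolding poly_altdef n_def by (simp add: coeff_map_poly)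
  also have "\<dots> = (\<Sum>j<n. of_int (coeff P j) * x ^ j) + of_int lc * x ^ n"
    unfolding lc_def n_def by (simp add: lessThan_Suc_atMost[symmetric])
  finally have "(\<Sum>j<n. of_int (coeff P j) * x ^ j) = - (of_int lc * x ^ n)"
    using Px by (simp add: add_eq_0_iff)
  then have "(\<Sum>j<n. of_int (coeff P j) * x ^ j) / of_int lc = - (x ^ n)"
    using lc0 by simp
  moreover have "(\<Sum>j<n. of_rat (c j) * x ^ j) = (\<Sum>j<n. of_int (coeff P j) * x ^ j) / (of_int lc :: complex)"
    unfolding c_def by (simp add: sum_divide_distrib of_rat_divide)
  ultimately have key: "(\<Sum>j<n. of_rat (c j) * x ^ j) = - (x ^ n)" by simp
  have Cv: "C *\<^sub>v v = x \<cdot>\<^sub>v v"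
  proof (rule eq_vecI)
    show "dim_vec (C *\<^sub>v v) = dim_vec (x \<cdot>\<^sub>v v)" using Cc unfolding v_def by simp
    fix i assume "i < dim_vec (x \<cdot>\<^sub>v v)"
    then have i: "i < n" unfolding v_def by simp
    have "(C *\<^sub>v v) $ i = (\<Sum>j\<in>{0..<n}. C $$ (i,j) * x ^ j)"
      using i Cc unfolding v_def by (simp add: scalar_prod_def)
    also have "\<dots> = x * x ^ i"
    proof (cases "Suc i < n")
      case True
      then have "(\<Sum>j\<in>{0..<n}. C $$ (i,j) * x ^ j) = (\<Sum>j\<in>{0..<n}. (if j = Suc i then x ^ j else 0))"
        using i unfolding C_def C0_def by (intro sum.cong) auto
      also have "\<dots> = x ^ Suc i" using True by simp
      finally show ?thesis by simp
    next
      case False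
      then have ni: "n = Suc i" using i by simp
      have "(\<Sum>j\<in>{0..<n}. C $$ (i,j) * x ^ j) = (\<Sum>j<n. - (of_rat (c j) * x ^ j))"
        using i False unfolding C_def C0_def by (intro sum.cong) (auto simp: of_rat_minus)
      also have "\<dots> = x ^ n" using key by (simp add: sum_negf)
      finally show ?thesis using ni by simp
    qed
    also have "\<dots> = (x \<cdot>\<^sub>v v) $ i" using i unfolding v_def by simp
    finally show "(C *\<^sub>v v) $ i = (x \<cdot>\<^sub>v v) $ i" .
  qed
  have v0: "v \<noteq> 0\<^sub>v n"
  proof
    assume "v = 0\<^sub>v n"
    then have "v $ 0 = 0" using n0 by simp
    then show False unfolding v_def using n0 by simp
  qed
  have ev: "eigenvector C v x" unfolding eigenvector_def using Cc Cv v0 unfolding v_def by auto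
  have "(C ^\<^sub>m m) *\<^sub>v v = x ^ m \<cdot>\<^sub>v v" by (rule eigenvector_pow[OF Cc ev])
  then have "eigenvector (C ^\<^sub>m m) v (x ^ m)" using ev Cc unfolding eigenvector_def by simp
  then have "eigenvalue (C ^\<^sub>m m) (x ^ m)" unfolding eigenvalue_def by blast
  then have "poly (char_poly (C ^\<^sub>m m)) (x ^ m) = 0"
    using eigenvalue_root_char_poly[of "C ^\<^sub>m m" n] Cc by simp
  moreover have "C ^\<^sub>m m = map_mat of_rat (C0 ^\<^sub>m m)"
    unfolding C_def by (rule of_rat_hom.mat_hom_pow[OF C0c, symmetric])
  moreover have "char_poly (map_mat of_rat (C0 ^\<^sub>m m)) = map_poly (of_rat :: rat \<Rightarrow> complex) (char_poly (C0 ^\<^sub>m m))"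
    by (rule of_rat_hom.char_poly_hom[of _ n]) (use C0c in simp)
  ultimately have R: "poly (map_poly (of_rat :: rat \<Rightarrow> complex) (char_poly (C0 ^\<^sub>m m))) (x ^ m) = 0" by simp
  have "coeff (char_poly (C0 ^\<^sub>m m)) n = 1"
    using degree_monic_char_poly[of "C0 ^\<^sub>m m" n] C0c by simp
  then have "char_poly (C0 ^\<^sub>m m) \<noteq> 0" by auto
  then have R0: "map_poly (of_rat :: rat \<Rightarrow> complex) (char_poly (C0 ^\<^sub>m m)) \<noteq> 0" by simp
  show ?thesis
    by (rule algebraicI'[OF _ R0 R]) (simp add: coeff_map_poly)
qed

lemma algebraic_rou_mult:
  assumes "algebraic (a::complex)" "root_of_unity z"
  shows "algebraic (z * a ^ L)"
proof -
  from assms(2) obtain k :: nat where k0: "k > 0" and zk: "z ^ k = 1" unfolding root_of_unity_def by blast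
  have "(z * a ^ L) ^ k = a ^ (L * k)" using zk by (simp add: power_mult_distrib power_mult)
  moreover have "algebraic (a ^ (L * k))" by (rule algebraic_power[OF assms(1)])
  ultimately have alg: "algebraic ((z * a ^ L) ^ k)" by simp
  show ?thesis
  proof (rule algebraic_root[OF alg])
    show "poly (monom 1 k) (z * a ^ L) = (z * a ^ L) ^ k" by (simp add: poly_monom)
    show "\<forall>i. coeff (monom 1 k) i \<in> \<int>" by (simp add: coeff_monom)
    show "lead_coeff (monom (1::complex) k) = 1" by (simp add: degree_monom_eq)
    show "degree (monom (1::complex) k) > 0" using k0 by (simp add: degree_monom_eq)
  qed
qed


lemma mahler_alg_step:
  assumes alg: "algebraic \<alpha>" and L: "L > 0" and z: "root_of_unity z"
  shows "\<exists>z'. root_of_unity z' \<and> mahler_alg (z' * \<alpha>) \<le> mahler_alg (z * \<alpha> ^ L)"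
proof -
  define \<gamma> where "\<gamma> = z * \<alpha> ^ L"
  have ag: "algebraic \<gamma>" unfolding \<gamma>_def by (rule algebraic_rou_mult[OF alg z])
  define p where "p = min_int_poly \<gamma>"
  have mp: "mpp \<gamma> p" unfolding p_def by (rule min_int_poly[OF ag])
  obtain z' where z': "z' ^ L = z" using nth_root_exists[OF L] by blast
  from z obtain k :: nat where k0: "k > 0" and zk: "z ^ k = 1" unfolding root_of_unity_def by blast
  have rz': "root_of_unity z'" unfolding root_of_unity_def
  proof (intro exI conjI)
    show "L * k > 0" using L k0 by simp
    show "z' ^ (L * k) = 1" using z' zk by (simp add: power_mult)
  qed
  define \<beta> where "\<beta> = z' * \<alpha>"
  have b\<gamma>: "\<beta> ^ L = \<gamma>" unfolding \<beta>_def \<gamma>_def using z' by (simp add: power_mult_distrib)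
  define Q where "Q = p \<circ>\<^sub>p monom 1 L"
  have ofQ: "of_int_poly Q = (of_int_poly p :: complex poly) \<circ>\<^sub>p monom 1 L"
    unfolding Q_def by (simp add: of_int_hom.map_poly_pcompose map_poly_monom)
  have Qb: "poly (of_int_poly Q) \<beta> = 0"
    unfolding ofQ using mp b\<gamma> unfolding mpp_def by (simp add: poly_pcompose poly_monom)
  have Q0: "Q \<noteq> 0" unfolding Q_def using mp L unfolding mpp_def
    by (simp add: pcompose_eq_0_iff degree_monom_eq)
  have ab: "algebraic \<beta>"
  proof (rule algebraicI[of "of_int_poly Q"])
    show "\<And>i. coeff (of_int_poly Q) i \<in> \<int>" by (simp add: coeff_map_poly)
    show "(of_int_poly Q :: complex poly) \<noteq> 0" using Q0 by simp
    show "poly (of_int_poly Q) \<beta> = 0" by (rule Qb)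
  qed
  define q where "q = min_int_poly \<beta>"
  have mq: "mpp \<beta> q" unfolding q_def by (rule min_int_poly[OF ab])
  have "q dvd Q" using mq Qb irreducible_root_dvd unfolding mpp_def by blast
  then have "mahler_measure q \<le> mahler_measure Q" by (rule mahler_measure_dvd[OF Q0])
  also have "\<dots> = mahler_measure p" unfolding Q_def by (rule mahler_measure_pcompose_monom[OF L])
  finally have "mahler_alg \<beta> \<le> mahler_alg \<gamma>" unfolding mahler_alg_def q_def p_def .
  then show ?thesis using rz' unfolding \<beta>_def \<gamma>_def by blast
qed

theorem mainTheorem5:
  fixes \<alpha> :: complex and L :: nat
  assumes "algebraic \<alpha>" and "\<alpha> \<noteq> 0" and "L > 0"
  shows "mahler_bar \<alpha> \<le> mahler_bar (\<alpha> ^ L)"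
proof -
  define S where "S b = {mahler_alg (z * b) | z. root_of_unity z}" for b
  have r1: "root_of_unity 1" unfolding root_of_unity_def by (intro exI[of _ 1]) simp
  have ne: "S b \<noteq> {}" for b unfolding S_def using r1 by blast
  have bdd: "bdd_below (S b)" for b
    unfolding S_def bdd_below_def by (intro exI[of _ 0]) (auto simp: mahler_alg_def mahler_measure_ge_0)
  have "Inf (S \<alpha>) \<le> Inf (S (\<alpha> ^ L))"
  proof (rule cInf_greatest[OF ne])
    fix y assume "y \<in> S (\<alpha> ^ L)"
    then obtain z where z: "root_of_unity z" and y: "y = mahler_alg (z * \<alpha> ^ L)" unfolding S_def by blast
    from mahler_alg_step[OF assms(1) assms(3) z] obtain z' where z': "root_of_unity z'"
      and le: "mahler_alg (z' * \<alpha>) \<le> mahler_alg (z * \<alpha> ^ L)" by blast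
    have "mahler_alg (z' * \<alpha>) \<in> S \<alpha>" unfolding S_def using z' by blast
    then have "Inf (S \<alpha>) \<le> mahler_alg (z' * \<alpha>)" by (rule cInf_lower[OF _ bdd])
    then show "Inf (S \<alpha>) \<le> y" using le y by simp
  qed
  then show ?thesis unfolding mahler_bar_def S_def .
qed

end
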